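(* Let $\Psi\in\mathcal P_p$, $m\ge p$, $q\in\{1,2,\ldots\}$, $N=n+p+qm+1$, $\beta=(q/N)^{1/q}$, $\gamma=n/N$, and let $\hat\Sigma$ be the power inverse Wishart MAP estimator with prior parameters $(\Psi,m,q)$. Then, in the Loewner order on symmetric matrices, $$\beta\Psi\le\hat\Sigma\le\beta\Psi+\gamma S.$$ In particular $\beta\Psi_{ii}\le\hat\Sigma_{ii}\le\beta\Psi_{ii}+\gamma S_{ii}$ for every $i$.
   Context: $\mathcal P_p$ is the set of positive definite $p\times p$ real matrices; $A\le B$ means $B-A$ is positive semidefinite. Data $X_1,\ldots,X_n\in\mathbb R^p$, $\bar X=\frac1n\sum_iX_i$, $S=\frac1n\sum_i(X_i-\bar X)(X_i-\bar X)^\top$. The MAP estimator $\hat\Sigma$ is the $\Sigma$-component of the unique maximizer over $\mu\in\mathbb R^p$, $\Sigma\in\mathcal P_p$ of $|\Sigma|^{-n/2}\exp(-\tfrac12\sum_i(X_i-\mu)^\top\Sigma^{-1}(X_i-\mu))\cdot\exp(-\tfrac12\operatorname{tr}((\Psi^{-1/2}\Sigma\Psi^{-1/2})^{-q}))|\Sigma|^{-(qm+p+1)/2}$, with $\Psi^{1/2}$ the positive definite square root and $\Psi^{-1/2}=(\Psi^{1/2})^{-1}$. *)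

theory Defs
  imports "HOL-Analysis.Analysis"
begin

definition sym_mat :: "real^'p^'p \<Rightarrow> bool" where
  "sym_mat A \<longleftrightarrow> transpose A = A"

definition pos_def :: "real^'p^'p \<Rightarrow> bool" where
  "pos_def A \<longleftrightarrow> sym_mat A \<and> (\<forall>x. x \<noteq> 0 \<longrightarrow> x \<bullet> (A *v x) > 0)"

definition pos_semidef :: "real^'p^'p \<Rightarrow> bool" where
  "pos_semidef A \<longleftrightarrow> sym_mat A \<and> (\<forall>x. x \<bullet> (A *v x) \<ge> 0)"

definition loewner_le :: "real^'p^'p \<Rightarrow> real^'p^'p \<Rightarrow> bool" where
  "loewner_le A B \<longleftrightarrow> pos_semidef (B - A)"

fun mat_pow :: "real^'p^'p \<Rightarrow> nat \<Rightarrow> real^'p^'p" where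
  "mat_pow A 0 = mat 1"
| "mat_pow A (Suc k) = A ** mat_pow A k"

definition pd_sqrt :: "real^'p^'p \<Rightarrow> real^'p^'p" where
  "pd_sqrt A = (THE R. pos_def R \<and> R ** R = A)"

definition outer :: "real^'p \<Rightarrow> real^'p \<Rightarrow> real^'p^'p" where
  "outer x y = (\<chi> i j. x $ i * y $ j)"

definition sample_mean :: "nat \<Rightarrow> (nat \<Rightarrow> real^'p) \<Rightarrow> real^'p" where
  "sample_mean n X = (1 / real n) *\<^sub>R (\<Sum>i=1..n. X i)"

definition sample_cov :: "nat \<Rightarrow> (nat \<Rightarrow> real^'p) \<Rightarrow> real^'p^'p" where
  "sample_cov n X = (1 / real n) *\<^sub>R
     (\<Sum>i=1..n. outer (X i - sample_mean n X) (X i - sample_mean n X))"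

text \<open>Likelihood times power inverse Wishart prior (unnormalised posterior).\<close>
definition piw_objective ::
  "real^'p^'p \<Rightarrow> real \<Rightarrow> nat \<Rightarrow> nat \<Rightarrow> (nat \<Rightarrow> real^'p) \<Rightarrow> real^'p \<Rightarrow> real^'p^'p \<Rightarrow> real" where
  "piw_objective Psi m q n X mu Sg =
     det Sg powr (- real n / 2)
     * exp (- (1/2) * (\<Sum>i=1..n. (X i - mu) \<bullet> (matrix_inv Sg *v (X i - mu))))
     * exp (- (1/2) * trace (matrix_inv (mat_pow
          (matrix_inv (pd_sqrt Psi) ** Sg ** matrix_inv (pd_sqrt Psi)) q)))
     * det Sg powr (- (real q * m + real CARD('p) + 1) / 2)"

definition is_maximizer ::
  "real^'p^'p \<Rightarrow> real \<Rightarrow> nat \<Rightarrow> nat \<Rightarrow> (nat \<Rightarrow> real^'p) \<Rightarrow> real^'p \<Rightarrow> real^'p^'p \<Rightarrow> bool" where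
  "is_maximizer Psi m q n X mu Sg \<longleftrightarrow> pos_def Sg \<and>
     (\<forall>mu' Sg'. pos_def Sg' \<longrightarrow>
        piw_objective Psi m q n X mu' Sg' \<le> piw_objective Psi m q n X mu Sg)"

definition is_piw_MAP ::
  "real^'p^'p \<Rightarrow> real \<Rightarrow> nat \<Rightarrow> nat \<Rightarrow> (nat \<Rightarrow> real^'p) \<Rightarrow> real^'p^'p \<Rightarrow> bool" where
  "is_piw_MAP Psi m q n X Sg \<longleftrightarrow>
     (\<exists>mu. is_maximizer Psi m q n X mu Sg \<and>
        (\<forall>mu' Sg'. is_maximizer Psi m q n X mu' Sg' \<longrightarrow> mu' = mu \<and> Sg' = Sg))"

end

theory Submission
  imports Defs
begin
lemma inner_transpose: "x \<bullet> (A *v y) = (transpose A *v x) \<bullet> (y::real^'n)"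
  by (simp add: dot_lmul_matrix)

lemma sym_inner: "sym_mat A \<Longrightarrow> x \<bullet> (A *v y) = (A *v x) \<bullet> (y::real^'n)"
  by (metis inner_transpose sym_mat_def)

lemma minv_props: "invertible A \<Longrightarrow> A ** matrix_inv A = mat 1 \<and> matrix_inv A ** A = mat 1"
  unfolding invertible_def matrix_inv_def by (rule someI_ex)

lemma minv_unique:
  fixes A B :: "real^'n^'n" assumes "A ** B = mat 1" shows "matrix_inv A = B"
proof -
  have inv: "invertible A" using assms invertible_right_inverse by blast
  from minv_props[OF inv] have h: "matrix_inv A ** A = mat 1" by blast
  then have "matrix_inv A = matrix_inv A ** (A ** B)" using assms by simp
  also have "... = B" by (simp add: matrix_mul_assoc h)
  finally show ?thesis .
qed

lemma minv_left: "invertible (A::real^'n^'n) \<Longrightarrow> matrix_inv A ** A = mat 1"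
  using minv_props by blast
lemma minv_right: "invertible (A::real^'n^'n) \<Longrightarrow> A ** matrix_inv A = mat 1"
  using minv_props by blast

lemma minv_invertible: "invertible (A::real^'n^'n) \<Longrightarrow> invertible (matrix_inv A)"
  using minv_props invertible_def by blast

lemma minv_minv: "invertible (A::real^'n^'n) \<Longrightarrow> matrix_inv (matrix_inv A) = A"
  by (simp add: minv_left minv_unique)

lemma minv_mult: "invertible (A::real^'n^'n) \<Longrightarrow> invertible (B::real^'n^'n) \<Longrightarrow>
   matrix_inv (A ** B) = matrix_inv B ** matrix_inv A"
proof -
  assume a: "invertible A" "invertible B"
  have "A ** B ** (matrix_inv B ** matrix_inv A) = A ** (B ** matrix_inv B) ** matrix_inv A"
    by (simp add: matrix_mul_assoc)
  then have "A ** B ** (matrix_inv B ** matrix_inv A) = mat 1" using a by (simp add: minv_right[OF a(1)] minv_right[OF a(2)])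
  then show ?thesis by (rule minv_unique)
qed

lemma minv_transpose: "invertible (A::real^'n^'n) \<Longrightarrow> matrix_inv (transpose A) = transpose (matrix_inv A)"
  by (metis minv_left minv_unique matrix_transpose_mul transpose_mat)

lemma minv_sym: "invertible (A::real^'n^'n) \<Longrightarrow> sym_mat A \<Longrightarrow> sym_mat (matrix_inv A)"
  by (metis minv_transpose sym_mat_def)

lemma inj_invertible: "inj ((*v) (A::real^'n^'n)) \<Longrightarrow> invertible A"
  using det_nz_iff_inj[of "(*v) A"] invertible_det_nz[of A]
  by (simp add: matrix_of_matrix_vector_mul)

lemma pd_sym: "pos_def A \<Longrightarrow> sym_mat A" by (simp add: pos_def_def)

lemma pd_inj: assumes "pos_def A" shows "inj ((*v) (A::real^'n^'n))"
proof (rule injI)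
  fix x y assume "A *v x = A *v y"
  then have "A *v (x - y) = 0" by (simp add: matrix_vector_mult_diff_distrib)
  then have "(x - y) \<bullet> (A *v (x - y)) = 0" by simp
  then show "x = y" using assms unfolding pos_def_def by (metis less_irrefl right_minus_eq)
qed

lemma pd_invertible: "pos_def (A::real^'n^'n) \<Longrightarrow> invertible A"
  using pd_inj inj_invertible by blast

lemma pd_minv: assumes "pos_def (A::real^'n^'n)" shows "pos_def (matrix_inv A)"
proof -
  have inv: "invertible A" using assms pd_invertible by blast
  have s: "sym_mat (matrix_inv A)" using minv_sym inv assms pd_sym by blast
  have "x \<bullet> (matrix_inv A *v x) > 0" if "x \<noteq> 0" for x
  proof -
    let ?y = "matrix_inv A *v x"
    have Ay: "A *v ?y = x" using minv_right[OF inv] by (simp add: matrix_vector_mul_assoc)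
    then have "?y \<noteq> 0" using that by auto
    then have "?y \<bullet> (A *v ?y) > 0" using assms unfolding pos_def_def by blast
    then show ?thesis using Ay by (simp add: inner_commute)
  qed
  then show ?thesis using s unfolding pos_def_def by blast
qed

lemma pd_congr:
  assumes "pos_def (A::real^'n^'n)" "invertible C"
  shows "pos_def (transpose C ** A ** C)"
proof -
  have s: "sym_mat (transpose C ** A ** C)"
    using assms(1) unfolding pos_def_def sym_mat_def
    by (simp add: matrix_transpose_mul matrix_mul_assoc)
  have "x \<bullet> ((transpose C ** A ** C) *v x) > 0" if "x \<noteq> 0" for x
  proof -
    have "C *v x \<noteq> 0" using that inj_matrix_vector_mult[OF assms(2)]
      by (metis matrix_vector_mult_0_right injD)
    then have "(C *v x) \<bullet> (A *v (C *v x)) > 0" using assms(1) unfolding pos_def_def by blast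
    moreover have "x \<bullet> ((transpose C ** A ** C) *v x) = (C *v x) \<bullet> (A *v (C *v x))"
    proof -
      have "(transpose C ** A ** C) *v x = transpose C *v (A *v (C *v x))"
        by (simp only: matrix_vector_mul_assoc matrix_mul_assoc)
      then show ?thesis using inner_transpose[of x "transpose C" "A *v (C *v x)"] by simp
    qed
    ultimately show ?thesis by simp
  qed
  then show ?thesis using s unfolding pos_def_def by blast
qed

lemma continuous_on_det:
  fixes M :: "real \<Rightarrow> real^'n^'n"
  assumes "\<And>i j. continuous_on S (\<lambda>s. M s $ i $ j)"
  shows "continuous_on S (\<lambda>s. det (M s))"
  unfolding det_def
  by (intro continuous_intros assms)

lemma det_pd_pos: assumes "pos_def (A::real^'n^'n)" shows "det A > 0"
proof (rule ccontr)
  assume "\<not> det A > 0"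
  define M where "M s = (1 - s) *\<^sub>R mat 1 + s *\<^sub>R A" for s :: real
  have cont: "continuous_on {0..1} (\<lambda>s. det (M s))"
    unfolding M_def by (rule continuous_on_det) (auto simp: mat_def intro!: continuous_intros)
  have "\<exists>s. 0 \<le> s \<and> s \<le> 1 \<and> det (M s) = 0"
    by (rule IVT2'[of "\<lambda>s. det (M s)"]) (use \<open>\<not> det A > 0\<close> cont in \<open>auto simp: M_def\<close>)
  then obtain s where s: "0 \<le> s" "s \<le> 1" "det (M s) = 0" by blast
  have "pos_def (M s)"
    unfolding pos_def_def sym_mat_def
  proof (intro conjI allI impI)
    show "transpose (M s) = M s" using assms
      by (simp add: M_def pos_def_def sym_mat_def transpose_def vec_eq_iff mat_def)
    fix x :: "real^'n" assume "x \<noteq> 0"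
    have "x \<bullet> (M s *v x) = (1 - s) * (x \<bullet> x) + s * (x \<bullet> (A *v x))"
      by (simp add: M_def matrix_vector_mult_add_rdistrib inner_add_right
          scaleR_matrix_vector_assoc[symmetric])
    moreover have "x \<bullet> x > 0" using \<open>x \<noteq> 0\<close> by simp
    moreover have "x \<bullet> (A *v x) > 0" using assms \<open>x \<noteq> 0\<close> unfolding pos_def_def by blast
    ultimately show "x \<bullet> (M s *v x) > 0" using s
    proof (cases "s = 0")
      case False
      then have "s * (x \<bullet> (A *v x)) > 0" using s \<open>x \<bullet> (A *v x) > 0\<close> by simp
      moreover have "(1 - s) * (x \<bullet> x) \<ge> 0" using s by simp
      ultimately show ?thesis using \<open>x \<bullet> (M s *v x) = _\<close> by linarith
    qed simp
  qed
  then have "invertible (M s)" by (rule pd_invertible)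
  then show False using s invertible_det_nz by blast
qed

lemma mv_sum: "(A::real^'n^'m) *v (\<Sum>b\<in>B. f b) = (\<Sum>b\<in>B. A *v f b)"
  by (induct B rule: infinite_finite_induct) (auto simp: matrix_vector_right_distrib)

lemma rayleigh:
  fixes A :: "real^'n^'n"
  assumes sym: "sym_mat A" and V: "subspace V" and inv: "\<forall>x\<in>V. A *v x \<in> V"
    and ne: "V \<noteq> {0}"
  shows "\<exists>v l. v \<in> V \<and> norm v = 1 \<and> A *v v = l *\<^sub>R v \<and> (\<forall>x\<in>V. l * (x \<bullet> x) \<le> x \<bullet> (A *v x))"
proof -
  let ?S = "sphere 0 1 \<inter> V"
  have cpt: "compact ?S" using closed_subspace[OF V] by (intro compact_Int_closed) auto
  obtain x0 where x0: "x0 \<in> V" "x0 \<noteq> 0" using ne subspace_0[OF V] by blast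
  have "(1 / norm x0) *\<^sub>R x0 \<in> ?S" using x0 V by (simp add: subspace_scale)
  then have nes: "?S \<noteq> {}" by blast
  have cont: "continuous_on ?S (\<lambda>x. x \<bullet> (A *v x))"
    by (intro continuous_intros linear_continuous_on) simp
  obtain v where v: "v \<in> ?S" and vmin: "\<forall>y\<in>?S. v \<bullet> (A *v v) \<le> y \<bullet> (A *v y)"
    using continuous_attains_inf[OF cpt nes cont] by blast
  define l where "l = v \<bullet> (A *v v)"
  have vV: "v \<in> V" and nv: "norm v = 1" using v by auto
  have vv: "v \<bullet> v = 1" using nv by (metis power2_norm_eq_inner power_one)
  have claim1: "l * (x \<bullet> x) \<le> x \<bullet> (A *v x)" if "x \<in> V" for x
  proof (cases "x = 0")
    case False
    define u where "u = (1 / norm x) *\<^sub>R x"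
    have "u \<in> ?S" using that False V by (simp add: u_def subspace_scale)
    then have "l \<le> u \<bullet> (A *v u)" using vmin l_def by blast
    also have "u \<bullet> (A *v u) = (x \<bullet> (A *v x)) / (norm x)^2"
      by (simp add: u_def matrix_vector_mult_scaleR power2_eq_square)
    finally have "l * (norm x)^2 \<le> x \<bullet> (A *v x)" using False by (simp add: field_simps)
    then show ?thesis by (simp add: power2_norm_eq_inner)
  qed simp
  have claim2: "(A *v v - l *\<^sub>R v) \<bullet> w = 0" if "w \<in> V" for w
  proof -
    define a where "a = (A *v v - l *\<^sub>R v) \<bullet> w"
    define b where "b = w \<bullet> (A *v w) - l * (w \<bullet> w)"
    have b0: "b \<ge> 0" using claim1[OF that] b_def by simp
    have key: "0 \<le> 2 * t * a + t^2 * b" for t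
    proof -
      have "v + t *\<^sub>R w \<in> V" using V vV that by (simp add: subspace_add subspace_scale)
      then have h: "l * ((v + t *\<^sub>R w) \<bullet> (v + t *\<^sub>R w)) \<le> (v + t *\<^sub>R w) \<bullet> (A *v (v + t *\<^sub>R w))"
        by (rule claim1)
      have e1: "(v + t *\<^sub>R w) \<bullet> (A *v (v + t *\<^sub>R w)) = l + 2 * t * ((A *v v) \<bullet> w) + t^2 * (w \<bullet> (A *v w))"
        using sym_inner[OF sym, of v w] inner_commute[of w "A *v v"]
        by (simp add: l_def matrix_vector_right_distrib matrix_vector_mult_scaleR inner_add_left
            inner_add_right algebra_simps power2_eq_square)
      have e2: "(v + t *\<^sub>R w) \<bullet> (v + t *\<^sub>R w) = 1 + 2 * t * (v \<bullet> w) + t^2 * (w \<bullet> w)"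
        using vv by (simp add: inner_add_left inner_add_right algebra_simps power2_eq_square inner_commute)
      show ?thesis using h unfolding e1 e2 a_def b_def
        by (simp add: inner_diff_left algebra_simps)
    qed
    define c where "c = b + 1"
    have c0: "c \<noteq> 0" "c > 0" using b0 by (auto simp: c_def)
    have k: "0 \<le> 2 * (- a / c) * a + (- a / c)^2 * b" by (rule key)
    have "c^2 * (2 * (- a / c) * a + (- a / c)^2 * b) = -2*a^2*c + a^2*b"
      using c0 by (simp add: field_simps power2_eq_square)
    moreover have "c^2 * (2 * (- a / c) * a + (- a / c)^2 * b) \<ge> 0"
      using k by simp
    ultimately have "-2*a^2*c + a^2*b \<ge> 0" by linarith
    then have "a^2 * (b + 2) \<le> 0" by (simp add: c_def algebra_simps)
    moreover have "b + 2 > 0" using b0 by simp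
    ultimately have "a^2 \<le> 0" by (simp add: mult_le_0_iff)
    then show ?thesis unfolding a_def by simp
  qed
  have "A *v v - l *\<^sub>R v \<in> V" using inv vV V by (simp add: subspace_diff subspace_scale)
  then have "(A *v v - l *\<^sub>R v) \<bullet> (A *v v - l *\<^sub>R v) = 0" by (rule claim2)
  then have "A *v v = l *\<^sub>R v" by simp
  then show ?thesis using vV nv claim1 by blast
qed

lemma spectral_aux:
  fixes A :: "real^'n^'n"
  assumes sym: "sym_mat A"
  shows "subspace V \<Longrightarrow> (\<forall>x\<in>V. A *v x \<in> V) \<Longrightarrow>
    \<exists>B. finite B \<and> B \<subseteq> V \<and> (\<forall>b\<in>B. norm b = 1 \<and> (\<exists>l. A *v b = l *\<^sub>R b))
      \<and> (\<forall>b\<in>B. \<forall>c\<in>B. b \<noteq> c \<longrightarrow> b \<bullet> c = 0)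
      \<and> (\<forall>x\<in>V. x = (\<Sum>b\<in>B. (b \<bullet> x) *\<^sub>R b))"
proof (induction "dim V" arbitrary: V rule: less_induct)
  case less
  show ?case
  proof (cases "V = {0}")
    case True
    show ?thesis by (rule exI[of _ "{}"]) (use True in auto)
  next
    case False
    obtain v l where v: "v \<in> V" "norm v = 1" "A *v v = l *\<^sub>R v"
      using rayleigh[OF sym less.prems(1) less.prems(2) False] by blast
    have vv: "v \<bullet> v = 1" using v(2) by (metis power2_norm_eq_inner power_one)
    define V' where "V' = V \<inter> {x. v \<bullet> x = 0}"
    have sV': "subspace V'" unfolding V'_def
      using less.prems(1) subspace_hyperplane subspace_inter by blast
    have iV': "\<forall>x\<in>V'. A *v x \<in> V'"
    proof
      fix x assume x: "x \<in> V'"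
      have "v \<bullet> (A *v x) = (A *v v) \<bullet> x" using sym_inner[OF sym] by blast
      also have "... = 0" using x v(3) by (simp add: V'_def)
      finally show "A *v x \<in> V'" using x less.prems(2) by (simp add: V'_def)
    qed
    have "V' \<subseteq> V" "v \<notin> V'" using vv by (auto simp: V'_def)
    then have "V' \<subset> V" using v(1) by blast
    then have "dim V' < dim V"
      using subspace_dim_equal[OF sV' less.prems(1)] dim_subset[of V' V] by fastforce
    then obtain B' where B': "finite B'" "B' \<subseteq> V'" "\<forall>b\<in>B'. norm b = 1 \<and> (\<exists>l. A *v b = l *\<^sub>R b)"
      "\<forall>b\<in>B'. \<forall>c\<in>B'. b \<noteq> c \<longrightarrow> b \<bullet> c = 0" "\<forall>x\<in>V'. x = (\<Sum>b\<in>B'. (b \<bullet> x) *\<^sub>R b)"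
      using less.hyps[OF _ sV' iV'] by blast
    have vB': "v \<notin> B'" using B'(2) vv by (auto simp: V'_def)
    have orth: "\<forall>b\<in>B'. v \<bullet> b = 0" using B'(2) by (auto simp: V'_def)
    show ?thesis
    proof (rule exI[of _ "insert v B'"], intro conjI)
      show "finite (insert v B')" using B' by simp
      show "insert v B' \<subseteq> V" using B'(2) v(1) by (auto simp: V'_def)
      show "\<forall>b\<in>insert v B'. norm b = 1 \<and> (\<exists>l. A *v b = l *\<^sub>R b)" using B'(3) v by blast
      show "\<forall>b\<in>insert v B'. \<forall>c\<in>insert v B'. b \<noteq> c \<longrightarrow> b \<bullet> c = 0"
        using B'(4) orth by (auto simp: inner_commute)
      show "\<forall>x\<in>V. x = (\<Sum>b\<in>insert v B'. (b \<bullet> x) *\<^sub>R b)"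
      proof
        fix x assume x: "x \<in> V"
        define x' where "x' = x - (v \<bullet> x) *\<^sub>R v"
        have "x' \<in> V'" using x v(1) less.prems(1) vv
          by (simp add: x'_def V'_def subspace_diff subspace_scale inner_diff_right)
        then have x'e: "x' = (\<Sum>b\<in>B'. (b \<bullet> x') *\<^sub>R b)" using B'(5) by blast
        have "(\<Sum>b\<in>B'. (b \<bullet> x') *\<^sub>R b) = (\<Sum>b\<in>B'. (b \<bullet> x) *\<^sub>R b)"
          using orth by (intro sum.cong) (auto simp: x'_def inner_diff_right inner_commute)
        then have "x = (v \<bullet> x) *\<^sub>R v + (\<Sum>b\<in>B'. (b \<bullet> x) *\<^sub>R b)"
          using x'e by (simp add: x'_def algebra_simps)
        then show "x = (\<Sum>b\<in>insert v B'. (b \<bullet> x) *\<^sub>R b)" using B'(1) vB' by simp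
      qed
    qed
  qed
qed

lemma rank1_mv: "(\<chi> i j. \<Sum>b\<in>B. f b * b$i * b$j) *v x = (\<Sum>b\<in>B. (f b * (b \<bullet> x)) *\<^sub>R (b::real^'n))"
proof -
  have "((\<chi> i j. \<Sum>b\<in>B. f b * b$i * b$j) *v x) $ i = (\<Sum>b\<in>B. (f b * (b \<bullet> x)) *\<^sub>R b) $ i" for i
  proof -
    have "((\<chi> i j. \<Sum>b\<in>B. f b * b$i * b$j) *v x) $ i = (\<Sum>j\<in>UNIV. (\<Sum>b\<in>B. f b * b$i * b$j) * x$j)"
      by (simp add: matrix_vector_mult_def)
    also have "... = (\<Sum>j\<in>UNIV. \<Sum>b\<in>B. f b * b$i * b$j * x$j)" by (simp add: sum_distrib_right)
    also have "... = (\<Sum>b\<in>B. \<Sum>j\<in>UNIV. f b * b$i * b$j * x$j)" by (rule sum.swap)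
    also have "... = (\<Sum>b\<in>B. f b * (b \<bullet> x) * b$i)"
      by (simp add: inner_vec_def sum_distrib_left sum_distrib_right mult_ac)
    finally show ?thesis by simp
  qed
  then show ?thesis by (simp add: vec_eq_iff)
qed

lemma orth_coeff:
  assumes "finite B" "\<forall>b\<in>B. norm b = 1" "\<forall>b\<in>B. \<forall>c\<in>B. b \<noteq> c \<longrightarrow> b \<bullet> c = 0" "b \<in> B"
  shows "b \<bullet> (\<Sum>c\<in>B. g c *\<^sub>R c) = g b"
proof -
  have bb: "b \<bullet> b = 1" using assms(2,4) by (metis power2_norm_eq_inner power_one)
  have "b \<bullet> (\<Sum>c\<in>B. g c *\<^sub>R c) = (\<Sum>c\<in>B. g c * (b \<bullet> c))" by (simp add: inner_sum_right)
  also have "... = (\<Sum>c\<in>B. if c = b then g b else 0)"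
    using assms(3,4) bb by (intro sum.cong) auto
  also have "... = g b" using assms(1,4) by simp
  finally show ?thesis .
qed

lemma spectral_UNIV:
  fixes A :: "real^'n^'n"
  assumes "sym_mat A"
  obtains B where "finite B" "\<forall>b\<in>B. norm b = 1 \<and> (\<exists>l. A *v b = l *\<^sub>R b)"
      "\<forall>b\<in>B. \<forall>c\<in>B. b \<noteq> c \<longrightarrow> b \<bullet> c = 0" "\<forall>x. x = (\<Sum>b\<in>B. (b \<bullet> x) *\<^sub>R b)"
proof -
  have "\<forall>x\<in>UNIV. A *v x \<in> UNIV" by (rule ballI) (rule UNIV_I)
  from spectral_aux[OF assms subspace_UNIV this] obtain B where
    B: "finite B \<and> B \<subseteq> UNIV \<and> (\<forall>b\<in>B. norm b = 1 \<and> (\<exists>l. A *v b = l *\<^sub>R b))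
      \<and> (\<forall>b\<in>B. \<forall>c\<in>B. b \<noteq> c \<longrightarrow> b \<bullet> c = 0)
      \<and> (\<forall>x\<in>UNIV. x = (\<Sum>b\<in>B. (b \<bullet> x) *\<^sub>R b))" by (rule exE)
  have 4: "\<forall>x. x = (\<Sum>b\<in>B. (b \<bullet> x) *\<^sub>R b)"
  proof
    fix x
    have "\<forall>x\<in>UNIV. x = (\<Sum>b\<in>B. (b \<bullet> x) *\<^sub>R b)" using B by (elim conjE)
    then show "x = (\<Sum>b\<in>B. (b \<bullet> x) *\<^sub>R b)" by (rule bspec) (rule UNIV_I)
  qed
  show thesis
    by (rule that[of B, OF B[THEN conjunct1] B[THEN conjunct2, THEN conjunct2, THEN conjunct1]
        B[THEN conjunct2, THEN conjunct2, THEN conjunct2, THEN conjunct1] 4])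
qed

lemma pd_sqrt_ex1:
  assumes pd: "pos_def (A::real^'n^'n)"
  shows "\<exists>!R. pos_def R \<and> R ** R = A"
proof -
  obtain B where B: "finite B" "\<forall>b\<in>B. norm b = 1 \<and> (\<exists>l. A *v b = l *\<^sub>R b)"
      "\<forall>b\<in>B. \<forall>c\<in>B. b \<noteq> c \<longrightarrow> b \<bullet> c = 0" "\<forall>x. x = (\<Sum>b\<in>B. (b \<bullet> x) *\<^sub>R b)"
    by (rule spectral_UNIV[OF pd_sym[OF pd]])
  have nB: "\<forall>b\<in>B. norm b = 1" using B(2) by blast
  have bb: "b \<bullet> b = 1" if "b \<in> B" for b using nB that by (metis power2_norm_eq_inner power_one)
  define lam where "lam b = b \<bullet> (A *v b)" for b
  have eig: "A *v b = lam b *\<^sub>R b" if "b \<in> B" for b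
  proof -
    have "norm b = 1 \<and> (\<exists>l. A *v b = l *\<^sub>R b)" using B(2) that by (rule bspec)
    then obtain l where l: "A *v b = l *\<^sub>R b" by (elim conjE exE)
    have "lam b = l * (b \<bullet> b)" unfolding lam_def l by simp
    then have "lam b = l" using bb[OF that] by simp
    then show ?thesis using l by simp
  qed
  have lpos: "lam b > 0" if "b \<in> B" for b
  proof -
    have "b \<noteq> 0" using nB that by auto
    then show ?thesis using pd unfolding pos_def_def lam_def by blast
  qed
  define s where "s b = sqrt (lam b)" for b
  define R where "R = (\<chi> i j. \<Sum>b\<in>B. s b * b$i * b$j)"
  have Rv: "R *v x = (\<Sum>b\<in>B. (s b * (b \<bullet> x)) *\<^sub>R b)" for x
    unfolding R_def by (rule rank1_mv)
  have Ax: "A *v x = (\<Sum>b\<in>B. (lam b * (b \<bullet> x)) *\<^sub>R b)" for x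
  proof -
    have "A *v x = A *v (\<Sum>b\<in>B. (b \<bullet> x) *\<^sub>R b)" using B(4)[rule_format, of x] by (rule arg_cong)
    also have "... = (\<Sum>b\<in>B. (b \<bullet> x) *\<^sub>R (A *v b))" by (simp add: mv_sum matrix_vector_mult_scaleR)
    also have "... = (\<Sum>b\<in>B. (lam b * (b \<bullet> x)) *\<^sub>R b)"
      by (intro sum.cong) (auto simp: eig mult.commute)
    finally show ?thesis .
  qed
  have RR: "R ** R = A"
  proof -
    have "(R ** R) *v x = A *v x" for x
    proof -
      have "(R ** R) *v x = R *v (R *v x)" by (simp add: matrix_vector_mul_assoc)
      also have "... = (\<Sum>b\<in>B. (s b * (b \<bullet> (R *v x))) *\<^sub>R b)" by (rule Rv)
      also have "... = (\<Sum>b\<in>B. (lam b * (b \<bullet> x)) *\<^sub>R b)"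
      proof (intro sum.cong refl)
        fix b assume b: "b \<in> B"
        have "b \<bullet> (R *v x) = s b * (b \<bullet> x)"
          unfolding Rv using orth_coeff[OF B(1) nB B(3) b, of "\<lambda>c. s c * (c \<bullet> x)"] by simp
        moreover have "s b * s b = lam b" using lpos[OF b] by (simp add: s_def)
        ultimately show "(s b * (b \<bullet> (R *v x))) *\<^sub>R b = (lam b * (b \<bullet> x)) *\<^sub>R b"
          by (simp add: mult.assoc[symmetric])
      qed
      also have "... = A *v x" by (rule Ax[symmetric])
      finally show ?thesis .
    qed
    then show ?thesis by (simp add: matrix_eq)
  qed
  have Rpd: "pos_def R"
    unfolding pos_def_def sym_mat_def
  proof (intro conjI allI impI)
    show "transpose R = R" by (simp add: R_def transpose_def vec_eq_iff mult_ac)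
    fix x :: "real^'n" assume x: "x \<noteq> 0"
    have e: "x \<bullet> (R *v x) = (\<Sum>b\<in>B. s b * (b \<bullet> x)^2)"
      by (simp add: Rv inner_sum_right power2_eq_square inner_commute mult_ac)
    obtain b where b: "b \<in> B" "b \<bullet> x \<noteq> 0"
    proof (rule ccontr)
      assume "\<not> thesis"
      then have "\<forall>b\<in>B. b \<bullet> x = 0" using that by blast
      then have "(\<Sum>b\<in>B. (b \<bullet> x) *\<^sub>R b) = 0" by simp
      then show False using x B(4)[rule_format, of x] by argo
    qed
    have "0 < (\<Sum>b\<in>B. s b * (b \<bullet> x)^2)"
    proof (rule sum_pos2[OF B(1) b(1)])
      show "0 < s b * (b \<bullet> x)^2" using lpos[OF b(1)] b(2) by (simp add: s_def)
      show "\<And>c. c \<in> B \<Longrightarrow> 0 \<le> s c * (c \<bullet> x)^2" using lpos by (simp add: s_def less_imp_le)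
    qed
    then show "x \<bullet> (R *v x) > 0" using e by simp
  qed
  have uniq: "R' = R" if R': "pos_def R'" "R' ** R' = A" for R'
  proof -
    have R'b: "R' *v b = s b *\<^sub>R b" if b: "b \<in> B" for b
    proof (rule ccontr)
      define w where "w = R' *v b - s b *\<^sub>R b"
      assume "R' *v b \<noteq> s b *\<^sub>R b"
      then have w0: "w \<noteq> 0" by (simp add: w_def)
      have ss: "s b * s b = lam b" using lpos[OF b] by (simp add: s_def)
      have "R' *v w + s b *\<^sub>R w = R' *v (R' *v b) - (s b * s b) *\<^sub>R b"
        by (simp add: w_def matrix_vector_mult_diff_distrib matrix_vector_mult_scaleR algebra_simps)
      also have "R' *v (R' *v b) = A *v b" using R'(2) by (simp add: matrix_vector_mul_assoc)
      finally have "R' *v w + s b *\<^sub>R w = 0" using eig[OF b] ss by simp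
      then have "R' *v w = - (s b *\<^sub>R w)" by (simp add: eq_neg_iff_add_eq_0)
      then have "w \<bullet> (R' *v w) = - (s b * (w \<bullet> w))" by simp
      moreover have "w \<bullet> (R' *v w) > 0" using R'(1) w0 unfolding pos_def_def by blast
      moreover have "s b * (w \<bullet> w) \<ge> 0" using lpos[OF b] by (simp add: s_def)
      ultimately show False by linarith
    qed
    have "R' *v x = R *v x" for x
    proof -
      have "R' *v x = R' *v (\<Sum>b\<in>B. (b \<bullet> x) *\<^sub>R b)" using B(4)[rule_format, of x] by (rule arg_cong)
      also have "... = (\<Sum>b\<in>B. (b \<bullet> x) *\<^sub>R (R' *v b))" by (simp add: mv_sum matrix_vector_mult_scaleR)
      also have "... = (\<Sum>b\<in>B. (s b * (b \<bullet> x)) *\<^sub>R b)"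
        by (intro sum.cong) (auto simp: R'b mult.commute)
      also have "... = R *v x" by (rule Rv[symmetric])
      finally show ?thesis .
    qed
    then show ?thesis by (simp add: matrix_eq)
  qed
  show ?thesis using Rpd RR uniq by blast
qed

lemma pd_sqrt_props:
  assumes "pos_def (A::real^'n^'n)"
  shows "pos_def (pd_sqrt A) \<and> pd_sqrt A ** pd_sqrt A = A"
  unfolding pd_sqrt_def by (rule theI'[OF pd_sqrt_ex1[OF assms]])

lemma matrix_add_rdistrib': "((B + C) ** (A::real^'n^'n)) = (B ** A) + (C ** A)"
  by (simp add: matrix_matrix_mult_def vec_eq_iff distrib_right sum.distrib)

lemma bb_mm: "bounded_bilinear ((**) :: real^'n^'n \<Rightarrow> real^'n^'n \<Rightarrow> real^'n^'n)"
proof -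
  have "bilinear ((**) :: real^'n^'n \<Rightarrow> real^'n^'n \<Rightarrow> real^'n^'n)"
    unfolding bilinear_def
    by (auto intro!: linearI simp: matrix_add_ldistrib matrix_add_rdistrib' matrix_scalar_ac
        scalar_matrix_assoc[symmetric])
  then show ?thesis by (simp add: bilinear_conv_bounded_bilinear)
qed

lemma trace_scaleR: "trace (c *\<^sub>R (A::real^'n^'n)) = c * trace A"
  by (simp add: trace_def sum_distrib_left)

lemma bl_trace: "bounded_linear (trace :: real^'n^'n \<Rightarrow> real)"
proof -
  have "linear (trace :: real^'n^'n \<Rightarrow> real)"
    by (intro linearI) (simp_all add: trace_add trace_scaleR)
  then show ?thesis by (simp add: linear_conv_bounded_linear)
qed

lemma bl_quad: "bounded_linear (\<lambda>M::real^'n^'n. z \<bullet> (M *v z))"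
proof -
  have "linear (\<lambda>M::real^'n^'n. z \<bullet> (M *v z))"
    by (intro linearI) (simp_all add: matrix_vector_mult_add_rdistrib inner_add_right
        scaleR_matrix_vector_assoc[symmetric])
  then show ?thesis by (simp add: linear_conv_bounded_linear)
qed

lemma mat_pow_add: "mat_pow A (a + b) = mat_pow A a ** mat_pow A b"
  by (induct a) (simp_all add: matrix_mul_assoc)

lemma mat_pow_Suc': "mat_pow A (Suc k) = mat_pow A k ** A"
  using mat_pow_add[of A k 1] by simp

lemma mat_pow_sym: "sym_mat A \<Longrightarrow> sym_mat (mat_pow A k)"
  unfolding sym_mat_def
  by (induct k) (simp_all add: matrix_transpose_mul mat_pow_Suc'[symmetric])

lemma mat_pow_minv:
  assumes "invertible (A::real^'n^'n)"
  shows "matrix_inv (mat_pow (matrix_inv A) k) = mat_pow A k"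
proof -
  have "mat_pow (matrix_inv A) k ** mat_pow A k = mat 1"
  proof (induct k)
    case (Suc k)
    have e: "mat_pow (matrix_inv A) (Suc k) = mat_pow (matrix_inv A) k ** matrix_inv A"
      by (rule mat_pow_Suc')
    have "mat_pow (matrix_inv A) (Suc k) ** mat_pow A (Suc k)
        = mat_pow (matrix_inv A) k ** (matrix_inv A ** A) ** mat_pow A k"
      unfolding e by (simp add: matrix_mul_assoc)
    also have "... = mat 1" using Suc minv_left[OF assms] by simp
    finally show ?case .
  qed simp
  then show ?thesis by (rule minv_unique)
qed

fun dpow :: "real^'n^'n \<Rightarrow> real^'n^'n \<Rightarrow> nat \<Rightarrow> real^'n^'n" where
  "dpow M D 0 = 0"
| "dpow M D (Suc k) = M ** dpow M D k + D ** mat_pow M k"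

lemma mat_pow_deriv:
  assumes "(F has_vector_derivative D) (at x)"
  shows "((\<lambda>t. mat_pow (F t) k) has_vector_derivative dpow (F x) D k) (at x)"
proof (induct k)
  case 0
  then show ?case by simp
next
  case (Suc k)
  have "((\<lambda>t. F t ** mat_pow (F t) k) has_vector_derivative
      (F x ** dpow (F x) D k + D ** mat_pow (F x) k)) (at x)"
    by (rule bounded_bilinear.has_vector_derivative[OF bb_mm assms Suc])
  then show ?case by simp
qed

lemma trace_dpow:
  "trace (mat_pow M a ** dpow M D k) = real k * trace (mat_pow M (a + k - 1) ** D)"
proof (induct k arbitrary: a)
  case 0
  then show ?case by (simp add: trace_def)
next
  case (Suc k)
  have "trace (mat_pow M a ** dpow M D (Suc k))
      = trace (mat_pow M (Suc a) ** dpow M D k) + trace ((mat_pow M a ** D) ** mat_pow M k)"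
  proof -
    have "mat_pow M a ** M = mat_pow M (Suc a)" by (rule mat_pow_Suc'[symmetric])
    then show ?thesis by (simp add: matrix_add_ldistrib trace_add matrix_mul_assoc)
  qed
  also have "trace ((mat_pow M a ** D) ** mat_pow M k) = trace (mat_pow M (k + a) ** D)"
    by (simp add: trace_mul_sym[of _ "mat_pow M k"] matrix_mul_assoc mat_pow_add)
  also have "trace (mat_pow M (Suc a) ** dpow M D k) = real k * trace (mat_pow M (a + k) ** D)"
    using Suc[of "Suc a"] by (cases k) simp_all
  finally show ?case by (simp add: algebra_simps add.commute)
qed

definition single :: "'n \<Rightarrow> 'n \<Rightarrow> real^'n^'n" where
  "single i j = (\<chi> a b. if a = i \<and> b = j then 1 else 0)"

lemma det_single:
  "det (mat 1 + t *\<^sub>R single i j :: real^'n^'n) = (if i = j then 1 + t else 1)"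
proof (cases "i = j")
  case True
  have "det (mat 1 + t *\<^sub>R single i j :: real^'n^'n) = (\<Prod>a\<in>UNIV. (mat 1 + t *\<^sub>R single i j :: real^'n^'n) $ a $ a)"
    by (rule det_diagonal) (auto simp: single_def mat_def True)
  also have "... = (\<Prod>a\<in>UNIV. if a = i then 1 + t else 1)"
    by (intro prod.cong) (auto simp: single_def mat_def True)
  finally show ?thesis using True by simp
next
  case False
  have "(mat 1 + t *\<^sub>R single i j :: real^'n^'n) =
      (\<chi> k. if k = i then row i (mat 1) + t *s row j (mat 1) else row k (mat 1))"
    using False by (simp add: vec_eq_iff single_def mat_def row_def)
  then have "det (mat 1 + t *\<^sub>R single i j :: real^'n^'n) = det (mat 1 :: real^'n^'n)"
    using det_row_operation[OF False, where c=t and A="mat 1 :: real^'n^'n"] by simp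
  then show ?thesis using False by simp
qed

lemma transpose_single_eq: "transpose (mat 1 + t *\<^sub>R single i j) = (mat 1 + t *\<^sub>R transpose (single i j) :: real^'n^'n)"
  by (simp add: vec_eq_iff transpose_def mat_def single_def)

lemma trace_single: "trace (M ** single i j) = M $ j $ i"
proof -
  have "trace (M ** single i j) = (\<Sum>a\<in>UNIV. \<Sum>b\<in>UNIV. M$a$b * (if b = i \<and> a = j then 1 else 0))"
    by (simp add: trace_def matrix_matrix_mult_def single_def conj_commute)
  also have "... = (\<Sum>a\<in>UNIV. if a = j then M$a$i else 0)"
    by (intro sum.cong) (auto simp: if_distrib cong: if_cong)
  finally show ?thesis by simp
qed

lemma trace_single_t: "trace (M ** transpose (single i j)) = M $ i $ j"
proof -
  have "trace (M ** transpose (single i j)) = (\<Sum>a\<in>UNIV. \<Sum>b\<in>UNIV. M$a$b * (if b = j \<and> a = i then 1 else 0))"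
    by (simp add: trace_def matrix_matrix_mult_def single_def transpose_def conj_commute)
  also have "... = (\<Sum>a\<in>UNIV. if a = i then M$a$j else 0)"
    by (intro sum.cong) (auto simp: if_distrib cong: if_cong)
  finally show ?thesis by simp
qed

lemma single_mv: "single i j *v y = (\<chi> a. if a = i then y $ j else 0)"
proof -
  have "(single i j *v y) $ a = (if a = i then y $ j else 0)" for a
    by (cases "a = i") (simp_all add: matrix_vector_mult_def single_def mult_delta_left)
  then show ?thesis by (simp add: vec_eq_iff)
qed

lemma single_t_mv: "transpose (single i j) *v y = (\<chi> a. if a = j then y $ i else 0)"
proof -
  have "(transpose (single i j) *v y) $ a = (if a = j then y $ i else 0)" for a
    by (cases "a = j") (simp_all add: matrix_vector_mult_def single_def transpose_def mult_delta_left)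
  then show ?thesis by (simp add: vec_eq_iff)
qed

lemma inner_delta: "z \<bullet> (\<chi> a. if a = i then c else 0) = z $ i * (c::real)"
  by (simp add: inner_vec_def if_distrib cong: if_cong)

lemma stationarity:
  fixes W :: "real^'n^'n" and z :: "nat \<Rightarrow> real^'n" and L :: "nat set"
  assumes W: "pos_def W" and q: "q \<ge> 1"
  and max: "\<And>M. pos_def M \<Longrightarrow>
      (N/2) * ln (det M) - (1/2) * (\<Sum>l\<in>L. z l \<bullet> (M *v z l)) - (1/2) * trace (mat_pow M q)
   \<le> (N/2) * ln (det W) - (1/2) * (\<Sum>l\<in>L. z l \<bullet> (W *v z l)) - (1/2) * trace (mat_pow W q)"
  shows "(if i = j then N else 0) = (\<Sum>l\<in>L. z l $ i * (W *v z l) $ j) + real q * mat_pow W q $ i $ j"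
proof -
  define E :: "real^'n^'n" where "E = single i j"
  define A where "A t = mat 1 + t *\<^sub>R E" for t :: real
  define At where "At t = mat 1 + t *\<^sub>R transpose E" for t :: real
  define Wt where "Wt t = A t ** W ** At t" for t
  define \<delta> where "\<delta> = (if i = j then 1 else 0 :: real)"
  define D where "D = E ** W + W ** transpose E"
  define h where "h t = (\<Sum>l\<in>L. z l \<bullet> (Wt t *v z l))" for t
  define \<tau> where "\<tau> t = trace (mat_pow (Wt t) q)" for t
  define f where "f t = (N/2) * (ln (det W) + 2 * ln (1 + t * \<delta>)) - h t / 2 - \<tau> t / 2" for t
  have dW: "det W > 0" using det_pd_pos[OF W] .
  have tA: "transpose (A t) = At t" for t
    unfolding A_def At_def E_def by (rule transpose_single_eq)
  have detA: "det (A t) = 1 + t * \<delta>" for t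
    unfolding A_def E_def \<delta>_def by (simp add: det_single)
  have Wt0: "Wt 0 = W" by (simp add: Wt_def A_def At_def)
  have pdWt: "pos_def (Wt t)" and detWt: "det (Wt t) = det W * (1 + t * \<delta>)^2" if t: "\<bar>t\<bar> < 1" for t
  proof -
    have pos: "1 + t * \<delta> > 0" using t by (auto simp: \<delta>_def)
    have "invertible (A t)" using pos detA invertible_det_nz by (metis less_irrefl)
    then have "invertible (transpose (A t))" by (rule transpose_invertible)
    have "transpose (At t) = A t" by (metis tA transpose_transpose)
    with pd_congr[OF W \<open>invertible (transpose (A t))\<close>] show "pos_def (Wt t)" by (simp add: Wt_def tA)
    show "det (Wt t) = det W * (1 + t * \<delta>)^2"
      by (simp add: Wt_def det_mul tA[symmetric] detA power2_eq_square)
  qed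
  have fle: "f t \<le> f 0" if t: "\<bar>0 - t\<bar> < 1" for t
  proof -
    have t': "\<bar>t\<bar> < 1" using t by simp
    have pos: "1 + t * \<delta> > 0" using t' by (auto simp: \<delta>_def)
    have "ln (det (Wt t)) = ln (det W) + 2 * ln (1 + t * \<delta>)"
      using detWt[OF t'] dW pos by (simp add: ln_mult ln_realpow)
    then have "f t = (N/2) * ln (det (Wt t)) - (1/2) * h t - (1/2) * \<tau> t" by (simp add: f_def)
    also have "... \<le> (N/2) * ln (det W) - (1/2) * (\<Sum>l\<in>L. z l \<bullet> (W *v z l)) - (1/2) * trace (mat_pow W q)"
      using max[OF pdWt[OF t']] by (simp add: h_def \<tau>_def)
    also have "... = f 0" by (simp add: f_def h_def \<tau>_def Wt0)
    finally show ?thesis .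
  qed
  have dA: "(A has_vector_derivative E) (at 0)"
    unfolding A_def
    by (rule has_vector_derivative_eq_rhs, (rule derivative_intros)+, simp)
  have dAt: "(At has_vector_derivative transpose E) (at 0)"
    unfolding At_def
    by (rule has_vector_derivative_eq_rhs, (rule derivative_intros)+, simp)
  have dAW: "((\<lambda>t. A t ** W) has_vector_derivative E ** W) (at 0)"
    by (rule has_vector_derivative_eq_rhs, rule bounded_bilinear.has_vector_derivative[OF bb_mm dA],
        rule has_vector_derivative_const, simp)
  have dWt: "(Wt has_vector_derivative D) (at 0)"
    unfolding Wt_def
    by (rule has_vector_derivative_eq_rhs, rule bounded_bilinear.has_vector_derivative[OF bb_mm dAW dAt],
        simp add: D_def A_def At_def add.commute)
  have dh: "(h has_real_derivative (\<Sum>l\<in>L. z l \<bullet> (D *v z l))) (at 0)"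
    unfolding has_real_derivative_iff_has_vector_derivative h_def
    by (rule has_vector_derivative_sum, rule bounded_linear.has_vector_derivative[OF bl_quad dWt])
  have dtau: "(\<tau> has_real_derivative trace (dpow W D q)) (at 0)"
    unfolding has_real_derivative_iff_has_vector_derivative \<tau>_def
    using bounded_linear.has_vector_derivative[OF bl_trace mat_pow_deriv[OF dWt, of q]]
    by (simp add: Wt0)
  have dln: "((\<lambda>t. ln (1 + t * \<delta>)) has_real_derivative \<delta>) (at 0)"
    by (auto intro!: derivative_eq_intros)
  have df: "(f has_real_derivative (N/2) * (2 * \<delta>) - (\<Sum>l\<in>L. z l \<bullet> (D *v z l)) / 2 - trace (dpow W D q) / 2) (at 0)"
  proof -
    have d1: "((\<lambda>t. ln (det W) + 2 * ln (1 + t * \<delta>)) has_real_derivative 0 + 2 * \<delta>) (at 0)"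
      by (intro DERIV_add DERIV_const DERIV_cmult dln)
    note d2 = DERIV_cmult[OF d1, of "N/2"]
    note d3 = DERIV_diff[OF DERIV_diff[OF d2 DERIV_cdivide[OF dh, of 2]] DERIV_cdivide[OF dtau, of 2]]
    show ?thesis unfolding f_def using d3 by simp
  qed
  have zero: "(N/2) * (2 * \<delta>) - (\<Sum>l\<in>L. z l \<bullet> (D *v z l)) / 2 - trace (dpow W D q) / 2 = 0"
    by (rule DERIV_local_max[OF df, of 1]) (use fle in auto)
  have symW: "sym_mat W" using W pd_sym by blast
  have hd: "z l \<bullet> (D *v z l) = 2 * (z l $ i * (W *v z l) $ j)" for l
  proof -
    have 1: "D *v z l = E *v (W *v z l) + W *v (transpose E *v z l)"
      by (simp only: D_def matrix_vector_mult_add_rdistrib matrix_vector_mul_assoc)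
    have 2: "z l \<bullet> (E *v (W *v z l)) = z l $ i * (W *v z l) $ j"
      unfolding E_def single_mv inner_delta ..
    have 3: "z l \<bullet> (W *v (transpose E *v z l)) = (W *v z l) \<bullet> (transpose E *v z l)"
      by (rule sym_inner[OF symW])
    have 4: "(W *v z l) \<bullet> (transpose E *v z l) = z l $ i * (W *v z l) $ j"
      unfolding E_def single_t_mv inner_delta by (rule mult.commute)
    show ?thesis unfolding 1 inner_add_right 2 3 4 by simp
  qed
  have symq: "sym_mat (mat_pow W q)" using mat_pow_sym[OF symW] .
  have td: "trace (dpow W D q) = real q * (2 * mat_pow W q $ i $ j)"
  proof -
    have "trace (dpow W D q) = trace (mat_pow W 0 ** dpow W D q)" by simp
    also have "... = real q * trace (mat_pow W (q - 1) ** D)" using trace_dpow[of W 0 D q] by simp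
    also have "trace (mat_pow W (q - 1) ** D) = trace (mat_pow W q ** E) + trace (mat_pow W q ** transpose E)"
    proof -
      obtain k where k: "q = Suc k" using q by (cases q) auto
      have e1: "W ** mat_pow W k = mat_pow W q" unfolding k by simp
      have e2: "mat_pow W k ** W = mat_pow W q" unfolding k by (rule mat_pow_Suc'[symmetric])
      have e3: "q - 1 = k" using k by simp
      have "trace (mat_pow W (q - 1) ** D) = trace ((mat_pow W (q - 1) ** E) ** W) + trace (mat_pow W (q - 1) ** W ** transpose E)"
        by (simp add: D_def matrix_add_ldistrib trace_add matrix_mul_assoc)
      also have "trace ((mat_pow W (q - 1) ** E) ** W) = trace (W ** (mat_pow W (q - 1) ** E))"
        by (rule trace_mul_sym)
      finally show ?thesis unfolding e3 by (simp only: matrix_mul_assoc e1 e2)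
    qed
    also have "... = 2 * mat_pow W q $ i $ j"
    proof -
      have a: "trace (mat_pow W q ** E) = mat_pow W q $ j $ i" unfolding E_def by (rule trace_single)
      have b: "trace (mat_pow W q ** transpose E) = mat_pow W q $ i $ j" unfolding E_def by (rule trace_single_t)
      have c: "mat_pow W q $ j $ i = mat_pow W q $ i $ j"
        using symq unfolding sym_mat_def by (metis transpose_def vec_lambda_beta)
      show ?thesis unfolding a b c by simp
    qed
    finally show ?thesis .
  qed
  show ?thesis using zero hd td
    by (simp add: \<delta>_def sum_distrib_left[symmetric] split: if_splits)
qed

lemma final_bounds:
  fixes W Z :: "real^'n^'n"
  assumes W: "pos_def W" and q: "q \<ge> 1" and Npos: "N > 0"
  and Zpsd: "\<And>x. x \<bullet> (Z *v x) \<ge> 0"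
  and eq: "\<And>i j. (if i = j then N else 0) = (Z ** W)$i$j + real q * mat_pow W q $ i $ j"
  shows "(real q / N) powr (1 / real q) * (x \<bullet> x) \<le> x \<bullet> (matrix_inv W *v x) \<and>
         x \<bullet> (matrix_inv W *v x) \<le> (real q / N) powr (1 / real q) * (x \<bullet> x) + (x \<bullet> (Z *v x)) / N"
proof -
  define T where "T = matrix_inv W"
  define \<beta> where "\<beta> = (real q / N) powr (1 / real q)"
  obtain k where k: "q = Suc k" using q by (cases q) auto
  have invW: "invertible W" using W pd_invertible by blast
  have WT: "W ** T = mat 1" and TW: "T ** W = mat 1" using minv_props[OF invW] by (auto simp: T_def)
  have Tpd: "pos_def T" unfolding T_def using pd_minv[OF W] .
  have symT: "sym_mat T" using Tpd pd_sym by blast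
  have eqm: "N *\<^sub>R mat 1 = Z ** W + real q *\<^sub>R mat_pow W q"
  proof -
    have "(N *\<^sub>R mat 1 :: real^'n^'n)$i$j = (Z ** W + real q *\<^sub>R mat_pow W q)$i$j" for i j
      using eq[of i j] by (cases "i = j") (simp_all add: mat_def)
    then show ?thesis by (simp add: vec_eq_iff)
  qed
  have NT: "N *\<^sub>R T = Z + real q *\<^sub>R mat_pow W k"
  proof -
    have "N *\<^sub>R T = (N *\<^sub>R mat 1) ** T" by (simp add: scalar_matrix_assoc[symmetric])
    also have "... = (Z ** W + real q *\<^sub>R mat_pow W q) ** T" using eqm by simp
    also have "... = Z ** (W ** T) + real q *\<^sub>R (mat_pow W k ** (W ** T))"
      by (simp add: matrix_add_rdistrib' scalar_matrix_assoc[symmetric] k mat_pow_Suc' matrix_mul_assoc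
          del: mat_pow.simps)
    also have "... = Z + real q *\<^sub>R mat_pow W k" using WT by simp
    finally show ?thesis .
  qed
  have quad: "N * (y \<bullet> (T *v y)) = y \<bullet> (Z *v y) + real q * (y \<bullet> (mat_pow W k *v y))" for y
  proof -
    have "N * (y \<bullet> (T *v y)) = y \<bullet> ((N *\<^sub>R T) *v y)"
      by (simp add: scaleR_matrix_vector_assoc[symmetric])
    also have "... = y \<bullet> (Z *v y) + real q * (y \<bullet> (mat_pow W k *v y))"
      unfolding NT by (simp add: matrix_vector_mult_add_rdistrib inner_add_right scaleR_matrix_vector_assoc[symmetric])
    finally show ?thesis .
  qed
  have qN: "real q / N > 0" using q Npos by simp
  have bpos: "\<beta> > 0" using qN q Npos by (simp add: \<beta>_def)
  have bq: "\<beta> ^ q = real q / N"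
  proof -
    have "\<beta> ^ q = \<beta> powr real q" using bpos by (simp add: powr_realpow)
    also have "... = real q / N" using qN q Npos by (simp add: \<beta>_def powr_powr)
    finally show ?thesis .
  qed
  \<comment> \<open>lower bound via a minimal eigenvector\<close>
  have ne: "(UNIV :: (real^'n) set) \<noteq> {0}"
  proof
    assume "(UNIV :: (real^'n) set) = {0}"
    moreover have "axis undefined (1::real) \<noteq> (0 :: real^'n)" by (simp add: axis_eq_0_iff)
    ultimately show False by blast
  qed
  obtain v l where v: "norm v = 1" "T *v v = l *\<^sub>R v" and lmin: "\<forall>y. l * (y \<bullet> y) \<le> y \<bullet> (T *v y)"
    using rayleigh[OF symT subspace_UNIV _ ne] by auto
  have vv: "v \<bullet> v = 1" using v(1) by (metis power2_norm_eq_inner power_one)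
  have lpos: "l > 0"
  proof -
    have "v \<noteq> 0" using v(1) by auto
    then have "v \<bullet> (T *v v) > 0" using Tpd unfolding pos_def_def by blast
    then show ?thesis using v(2) vv by simp
  qed
  have Wv: "W *v v = (1 / l) *\<^sub>R v"
  proof -
    have "W *v (T *v v) = v" using WT by (simp add: matrix_vector_mul_assoc)
    then have "l *\<^sub>R (W *v v) = v" using v(2) by (simp add: matrix_vector_mult_scaleR)
    then show ?thesis using lpos by (metis divide_inverse_commute inverse_eq_divide mult.right_neutral
        nonzero_divide_eq_eq scaleR_scaleR scaleR_one less_irrefl)
  qed
  have Wkv: "mat_pow W m *v v = ((1 / l) ^ m) *\<^sub>R v" for m
    by (induct m) (simp_all add: matrix_vector_mul_assoc[symmetric] matrix_vector_mult_scaleR Wv)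
  have "N * l = v \<bullet> (Z *v v) + real q * (1 / l) ^ k"
    using quad[of v] v(2) vv by (simp add: Wkv)
  then have "N * l \<ge> real q * (1 / l) ^ k" using Zpsd[of v] by linarith
  then have "N * l * l ^ k \<ge> real q * (1 / l) ^ k * l ^ k" using lpos by (simp add: mult_right_mono)
  moreover have "(1 / l) ^ k * l ^ k = 1" using lpos by (simp add: power_one_over)
  ultimately have "N * l * l ^ k \<ge> real q" by (simp add: mult.assoc)
  moreover have "N * l ^ q = N * l * l ^ k" by (simp add: k mult.assoc)
  ultimately have "N * l ^ q \<ge> real q" by linarith
  then have lq: "l ^ q \<ge> real q / N" using Npos by (simp add: field_simps)
  have "\<beta> \<le> l"
  proof -
    have "\<beta> = (real q / N) powr (1 / real q)" by (simp add: \<beta>_def)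
    also have "... \<le> (l ^ q) powr (1 / real q)" using lq qN by (intro powr_mono2) auto
    also have "(l ^ q) powr (1 / real q) = l"
      using lpos q by (simp add: powr_realpow[symmetric] powr_powr)
    finally show ?thesis .
  qed
  have lower: "\<beta> * (y \<bullet> y) \<le> y \<bullet> (T *v y)" for y
  proof -
    have "\<beta> * (y \<bullet> y) \<le> l * (y \<bullet> y)" using \<open>\<beta> \<le> l\<close> by (simp add: mult_right_mono)
    also have "... \<le> y \<bullet> (T *v y)" using lmin by blast
    finally show ?thesis .
  qed
  have Wb: "\<beta> * norm (W *v y) \<le> norm y" for y
  proof -
    define u where "u = W *v y"
    have Tu: "T *v u = y" using TW by (simp add: u_def matrix_vector_mul_assoc)
    have "\<beta> * (norm u)^2 = \<beta> * (u \<bullet> u)" by (simp add: power2_norm_eq_inner)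
    also have "... \<le> u \<bullet> (T *v u)" by (rule lower)
    also have "... \<le> norm u * norm y" using Tu norm_cauchy_schwarz by simp
    finally have h: "\<beta> * (norm u)^2 \<le> norm u * norm y" .
    show ?thesis
    proof (cases "norm u = 0")
      case True then show ?thesis by (simp add: u_def)
    next
      case False
      then have "norm u > 0" by simp
      with h show ?thesis by (simp add: u_def power2_eq_square mult.assoc[symmetric] mult.commute[of \<beta>])
    qed
  qed
  have Wkb: "norm (mat_pow W m *v y) \<le> norm y / \<beta> ^ m" for m y
  proof (induct m arbitrary: y)
    case 0 then show ?case by simp
  next
    case (Suc m)
    have "norm (mat_pow W (Suc m) *v y) = norm (W *v (mat_pow W m *v y))"
      by (simp add: matrix_vector_mul_assoc)
    also have "... \<le> norm (mat_pow W m *v y) / \<beta>" using Wb[of "mat_pow W m *v y"] bpos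
      by (simp add: field_simps)
    also have "... \<le> (norm y / \<beta> ^ m) / \<beta>"
      by (rule divide_right_mono[OF Suc]) (use bpos in simp)
    finally show ?case by (simp add: field_simps)
  qed
  have upper: "x \<bullet> (T *v x) \<le> \<beta> * (x \<bullet> x) + (x \<bullet> (Z *v x)) / N"
  proof -
    have "x \<bullet> (mat_pow W k *v x) \<le> norm x * norm (mat_pow W k *v x)" by (rule norm_cauchy_schwarz)
    also have "... \<le> norm x * (norm x / \<beta> ^ k)" by (rule mult_left_mono[OF Wkb norm_ge_zero])
    finally have h: "x \<bullet> (mat_pow W k *v x) \<le> (x \<bullet> x) / \<beta> ^ k"
      by (simp add: power2_norm_eq_inner[symmetric] power2_eq_square)
    have qb: "real q / \<beta> ^ k = N * \<beta>"
      using bq bpos Npos by (simp add: k field_simps)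
    have "N * (x \<bullet> (T *v x)) \<le> x \<bullet> (Z *v x) + real q * ((x \<bullet> x) / \<beta> ^ k)"
    proof -
      have "real q * (x \<bullet> (mat_pow W k *v x)) \<le> real q * ((x \<bullet> x) / \<beta> ^ k)"
        by (rule mult_left_mono[OF h]) simp
      then show ?thesis using quad[of x] by linarith
    qed
    also have "real q * ((x \<bullet> x) / \<beta> ^ k) = N * \<beta> * (x \<bullet> x)"
      using qb by (metis times_divide_eq_left times_divide_eq_right)
    finally have "N * (x \<bullet> (T *v x)) \<le> x \<bullet> (Z *v x) + N * \<beta> * (x \<bullet> x)" .
    then show ?thesis using Npos by (simp add: field_simps)
  qed
  show ?thesis using lower[of x] upper by (simp add: T_def \<beta>_def)
qed

lemma outer_mv: "outer a b *v y = (b \<bullet> y) *\<^sub>R (a::real^'n)"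
  by (simp add: vec_eq_iff outer_def matrix_vector_mult_def inner_vec_def sum_distrib_left mult_ac)

lemma sum_mv: "(\<Sum>l\<in>L. M l) *v (y::real^'n) = (\<Sum>l\<in>L. M l *v y)"
  by (induct L rule: infinite_finite_induct) (auto simp: matrix_vector_mult_add_rdistrib)

lemma quad_outer_sum: "y \<bullet> ((\<Sum>l\<in>L. outer (a l) (a l)) *v y) = (\<Sum>l\<in>L. (a l \<bullet> y)^2)"
  by (simp add: sum_mv outer_mv inner_sum_right power2_eq_square inner_commute)

lemma sym_outer_sum: "sym_mat (\<Sum>l\<in>L. outer (a l) (a l) :: real^'n^'n)"
  unfolding sym_mat_def
  by (simp add: vec_eq_iff transpose_def outer_def mult.commute)

lemma sym_sample_cov: "sym_mat (sample_cov n X)"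
proof -
  have "transpose (\<Sum>l\<in>{1..n}. outer (X l - sample_mean n X) (X l - sample_mean n X))
      = (\<Sum>l\<in>{1..n}. outer (X l - sample_mean n X) (X l - sample_mean n X))"
    by (rule sym_outer_sum[unfolded sym_mat_def])
  then show ?thesis unfolding sample_cov_def sym_mat_def by (simp only: transpose_scalar)
qed

lemma quad_sample_cov:
  "y \<bullet> (sample_cov n X *v y) = (1 / real n) * (\<Sum>l\<in>{1..n}. ((X l - sample_mean n X) \<bullet> y)^2)"
  unfolding sample_cov_def
  by (simp add: scaleR_matrix_vector_assoc[symmetric] quad_outer_sum)

lemma axis_quad: "axis i 1 \<bullet> (A *v axis i 1) = (A::real^'n^'n) $ i $ i"
proof -
  have "(A *v axis i 1) $ i = A $ i $ i"
    by (simp add: matrix_vector_mult_def axis_def mult_delta_right)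
  then show ?thesis by (simp add: inner_axis')
qed

lemma sum_centered:
  assumes "n \<ge> 1"
  shows "(\<Sum>l\<in>{1..n}. X l - sample_mean n X) = (0::real^'n)"
proof -
  have "(\<Sum>l\<in>{1..n}. X l - sample_mean n X) = (\<Sum>l\<in>{1..n}. X l) - real n *\<^sub>R sample_mean n X"
    by (simp add: sum_subtractf sum_constant_scaleR del: sum_constant)
  also have "real n *\<^sub>R sample_mean n X = (\<Sum>l\<in>{1..n}. X l)"
    using assms by (simp add: sample_mean_def)
  finally show ?thesis by simp
qed

lemma mean_best:
  fixes P :: "real^'n^'n"
  assumes sym: "sym_mat P" and psd: "\<And>x. x \<bullet> (P *v x) \<ge> 0" and n: "n \<ge> 1"
  shows "(\<Sum>l\<in>{1..n}. (X l - sample_mean n X) \<bullet> (P *v (X l - sample_mean n X)))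
       \<le> (\<Sum>l\<in>{1..n}. (X l - mu) \<bullet> (P *v (X l - mu)))"
proof -
  define a where "a l = X l - sample_mean n X" for l
  define d where "d = sample_mean n X - mu"
  have xa: "X l - mu = a l + d" for l by (simp add: a_def d_def)
  have e: "(a l + d) \<bullet> (P *v (a l + d)) = a l \<bullet> (P *v a l) + 2 * (a l \<bullet> (P *v d)) + d \<bullet> (P *v d)" for l
  proof -
    have "d \<bullet> (P *v a l) = a l \<bullet> (P *v d)" using sym_inner[OF sym, of d "a l"] by (simp add: inner_commute)
    then show ?thesis by (simp add: matrix_vector_right_distrib inner_add_left inner_add_right)
  qed
  have z: "(\<Sum>l\<in>{1..n}. a l \<bullet> (P *v d)) = 0"
    using sum_centered[OF n, of X] by (simp add: a_def inner_sum_left[symmetric])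
  have "(\<Sum>l\<in>{1..n}. (X l - mu) \<bullet> (P *v (X l - mu)))
      = (\<Sum>l\<in>{1..n}. a l \<bullet> (P *v a l)) + 2 * (\<Sum>l\<in>{1..n}. a l \<bullet> (P *v d)) + real n * (d \<bullet> (P *v d))"
    unfolding xa e by (simp add: sum.distrib sum_distrib_left)
  also have "... \<ge> (\<Sum>l\<in>{1..n}. a l \<bullet> (P *v a l))" using z psd[of d] by simp
  finally show ?thesis by (simp add: a_def)
qed

lemma lnobj:
  fixes Psi Sg :: "real^'p^'p"
  assumes Psi: "pos_def Psi" and Sg: "pos_def Sg"
  shows "piw_objective Psi m q n X mu Sg > 0 \<and>
    ln (piw_objective Psi m q n X mu Sg) =
      - (real n + real CARD('p) + real q * m + 1) * ln (det (pd_sqrt Psi)) +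
      ((real n + real CARD('p) + real q * m + 1) / 2 * ln (det (pd_sqrt Psi ** matrix_inv Sg ** pd_sqrt Psi))
       - (1/2) * (\<Sum>l\<in>{1..n}. (matrix_inv (pd_sqrt Psi) *v (X l - mu)) \<bullet>
            ((pd_sqrt Psi ** matrix_inv Sg ** pd_sqrt Psi) *v (matrix_inv (pd_sqrt Psi) *v (X l - mu))))
       - (1/2) * trace (mat_pow (pd_sqrt Psi ** matrix_inv Sg ** pd_sqrt Psi) q))"
proof -
  define R where "R = pd_sqrt Psi"
  define Ri where "Ri = matrix_inv R"
  define Si where "Si = matrix_inv Sg"
  define W where "W = R ** Si ** R"
  define N where "N = real n + real CARD('p) + real q * m + 1"
  have Rpd: "pos_def R" and RR: "R ** R = Psi" using pd_sqrt_props[OF Psi] by (auto simp: R_def)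
  have symR: "sym_mat R" using Rpd pd_sym by blast
  have invR: "invertible R" using Rpd pd_invertible by blast
  have RRi: "R ** Ri = mat 1" and RiR: "Ri ** R = mat 1" using minv_props[OF invR] by (auto simp: Ri_def)
  have invS: "invertible Sg" using Sg pd_invertible by blast
  have Sipd: "pos_def Si" unfolding Si_def using pd_minv[OF Sg] .
  have invSi: "invertible Si" using Sipd pd_invertible by blast
  have Wpd: "pos_def W" using pd_congr[OF Sipd invR] symR by (simp add: W_def sym_mat_def)
  have invW: "invertible W" using Wpd pd_invertible by blast
  have dS: "det Sg > 0" using det_pd_pos[OF Sg] .
  have dR: "det R > 0" using det_pd_pos[OF Rpd] .
  have dSi: "det Si = 1 / det Sg"
  proof -
    have "det Sg * det Si = 1" using minv_props[OF invS] by (simp add: Si_def det_mul[symmetric])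
    then show ?thesis using dS by (simp add: field_simps)
  qed
  have lnW: "ln (det W) = 2 * ln (det R) - ln (det Sg)"
    using dR dS by (simp add: W_def det_mul dSi ln_mult ln_div)
  have quad: "(X l - mu) \<bullet> (Si *v (X l - mu)) = (Ri *v (X l - mu)) \<bullet> (W *v (Ri *v (X l - mu)))" for l
  proof -
    define a where "a = X l - mu"
    have WRi: "W ** Ri = R ** Si" by (metis W_def RRi matrix_mul_assoc matrix_mul_rid)
    have "W *v (Ri *v a) = R *v (Si *v a)"
      by (simp only: matrix_vector_mul_assoc WRi)
    then have "(Ri *v a) \<bullet> (W *v (Ri *v a)) = (R *v (Ri *v a)) \<bullet> (Si *v a)"
      using sym_inner[OF symR] by simp
    also have "R *v (Ri *v a) = a" by (simp add: matrix_vector_mul_assoc RRi)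
    finally show ?thesis by (simp add: a_def)
  qed
  have tr: "matrix_inv (mat_pow (Ri ** Sg ** Ri) q) = mat_pow W q"
  proof -
    have "matrix_inv W = Ri ** Sg ** Ri"
    proof -
      have "matrix_inv W = matrix_inv R ** matrix_inv (R ** Si)"
        unfolding W_def by (rule minv_mult) (use invR invSi invertible_mult in auto)
      also have "matrix_inv (R ** Si) = matrix_inv Si ** matrix_inv R"
        by (rule minv_mult[OF invR invSi])
      also have "matrix_inv Si = Sg" unfolding Si_def by (rule minv_minv[OF invS])
      finally show ?thesis by (simp add: Ri_def matrix_mul_assoc)
    qed
    then show ?thesis using mat_pow_minv[OF invW, of q] by simp
  qed
  define u where "u = - (1/2) * (\<Sum>l\<in>{1..n}. (X l - mu) \<bullet> (Si *v (X l - mu)))"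
  define v where "v = - (1/2) * trace (mat_pow W q)"
  have obj: "piw_objective Psi m q n X mu Sg = det Sg powr (- real n / 2) * exp u * exp v
      * det Sg powr (- (real q * m + real CARD('p) + 1) / 2)"
    unfolding piw_objective_def u_def v_def Si_def using tr by (simp add: R_def Ri_def)
  have pos: "piw_objective Psi m q n X mu Sg > 0" unfolding obj using dS by simp
  have "ln (piw_objective Psi m q n X mu Sg) = (- real n / 2) * ln (det Sg) + u + v
      + (- (real q * m + real CARD('p) + 1) / 2) * ln (det Sg)"
    unfolding obj using dS by (simp add: ln_mult ln_powr)
  also have "... = - N * ln (det R) + (N / 2 * ln (det W)
       - (1/2) * (\<Sum>l\<in>{1..n}. (Ri *v (X l - mu)) \<bullet> (W *v (Ri *v (X l - mu))))
       - (1/2) * trace (mat_pow W q))"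
    unfolding lnW u_def v_def quad N_def by (simp add: field_simps)
  finally show ?thesis using pos by (simp add: N_def R_def Ri_def W_def Si_def)
qed

lemma outer_mm: "outer a b ** W = outer a (transpose W *v b :: real^'n)"
  by (simp add: vec_eq_iff matrix_matrix_mult_def outer_def matrix_vector_mult_def transpose_def
      sum_distrib_left mult_ac)

lemma sum_mm: "(\<Sum>l\<in>L. M l) ** (W::real^'n^'n) = (\<Sum>l\<in>L. M l ** W)"
  by (induct L rule: infinite_finite_induct) (auto simp: matrix_add_rdistrib')

lemma quad_diff: "y \<bullet> ((A - B) *v y) = y \<bullet> (A *v y) - y \<bullet> ((B::real^'n^'n) *v y)"
  by (simp add: matrix_vector_mult_diff_rdistrib inner_diff_right)

lemma quad_add: "y \<bullet> ((A + B) *v y) = y \<bullet> (A *v y) + y \<bullet> ((B::real^'n^'n) *v y)"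
  by (simp add: matrix_vector_mult_add_rdistrib inner_add_right)

lemma quad_scale: "y \<bullet> ((c *\<^sub>R A) *v y) = c * (y \<bullet> ((A::real^'n^'n) *v y))"
  by (simp add: scaleR_matrix_vector_assoc[symmetric])

lemma sym_diff: "sym_mat A \<Longrightarrow> sym_mat B \<Longrightarrow> sym_mat (A - (B::real^'n^'n))"
  unfolding sym_mat_def by (simp add: vec_eq_iff transpose_def)

lemma sym_add: "sym_mat A \<Longrightarrow> sym_mat B \<Longrightarrow> sym_mat (A + (B::real^'n^'n))"
  unfolding sym_mat_def by (simp add: vec_eq_iff transpose_def)

lemma sym_scale: "sym_mat A \<Longrightarrow> sym_mat (c *\<^sub>R (A::real^'n^'n))"
  unfolding sym_mat_def by (simp add: transpose_scalar)

theorem mainTheorem9: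
  fixes Psi SigmaHat :: "real^'p^'p" and m :: real and q n :: nat
    and X :: "nat \<Rightarrow> real^'p"
  assumes "pos_def Psi"
    and "m \<ge> real CARD('p)"
    and "q \<ge> 1"
    and "n \<ge> 1"
    and "is_piw_MAP Psi m q n X SigmaHat"
  defines "N \<equiv> real n + real CARD('p) + real q * m + 1"
  defines "\<beta> \<equiv> (real q / N) powr (1 / real q)"
  defines "\<gamma> \<equiv> real n / N"
  shows "loewner_le (\<beta> *\<^sub>R Psi) SigmaHat
       \<and> loewner_le SigmaHat (\<beta> *\<^sub>R Psi + \<gamma> *\<^sub>R sample_cov n X)
       \<and> (\<forall>i. \<beta> * Psi $ i $ i \<le> SigmaHat $ i $ i
              \<and> SigmaHat $ i $ i \<le> \<beta> * Psi $ i $ i + \<gamma> * sample_cov n X $ i $ i)"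
proof -
  note Psi = assms(1) and q = assms(3) and n = assms(4)
  obtain mu0 where mx: "is_maximizer Psi m q n X mu0 SigmaHat"
    using assms(5) unfolding is_piw_MAP_def by blast
  have Spd: "pos_def SigmaHat" using mx unfolding is_maximizer_def by blast
  have maxall: "\<And>mu' Sg'. pos_def Sg' \<Longrightarrow> piw_objective Psi m q n X mu' Sg' \<le> piw_objective Psi m q n X mu0 SigmaHat"
    using mx unfolding is_maximizer_def by blast
  define mh where "mh = sample_mean n X"
  have objmean: "piw_objective Psi m q n X mu Sg \<le> piw_objective Psi m q n X mh Sg" if Sg: "pos_def Sg" for mu Sg
  proof -
    have Pi: "pos_def (matrix_inv Sg)" using pd_minv[OF Sg] .
    have "(\<Sum>l\<in>{1..n}. (X l - mh) \<bullet> (matrix_inv Sg *v (X l - mh)))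
        \<le> (\<Sum>l\<in>{1..n}. (X l - mu) \<bullet> (matrix_inv Sg *v (X l - mu)))"
      unfolding mh_def
    proof (rule mean_best[OF pd_sym[OF Pi] _ n])
      fix x :: "real^'p"
      show "x \<bullet> (matrix_inv Sg *v x) \<ge> 0"
        using Pi unfolding pos_def_def by (cases "x = 0") (auto intro: less_imp_le)
    qed
    then have e: "exp (- (1/2) * (\<Sum>l\<in>{1..n}. (X l - mu) \<bullet> (matrix_inv Sg *v (X l - mu))))
        \<le> exp (- (1/2) * (\<Sum>l\<in>{1..n}. (X l - mh) \<bullet> (matrix_inv Sg *v (X l - mh))))" by simp
    show ?thesis unfolding piw_objective_def
      by (intro mult_right_mono mult_left_mono e) auto
  qed
  have maxmh: "piw_objective Psi m q n X mh Sg \<le> piw_objective Psi m q n X mh SigmaHat" if "pos_def Sg" for Sg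
    using maxall[OF that, of mh] objmean[OF Spd, of mu0] by linarith
  define R where "R = pd_sqrt Psi"
  define Ri where "Ri = matrix_inv R"
  define W where "W = R ** matrix_inv SigmaHat ** R"
  define z where "z l = Ri *v (X l - mh)" for l
  define \<phi> where "\<phi> M = (N/2) * ln (det M) - (1/2) * (\<Sum>l\<in>{1..n}. z l \<bullet> (M *v z l)) - (1/2) * trace (mat_pow M q)" for M
  have Rpd: "pos_def R" and RR: "R ** R = Psi" using pd_sqrt_props[OF Psi] by (auto simp: R_def)
  have symR: "sym_mat R" using Rpd pd_sym by blast
  have invR: "invertible R" using Rpd pd_invertible by blast
  have RRi: "R ** Ri = mat 1" and RiR: "Ri ** R = mat 1" using minv_props[OF invR] by (auto simp: Ri_def)
  have Ripd: "pos_def Ri" unfolding Ri_def using pd_minv[OF Rpd] .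
  have symRi: "sym_mat Ri" using Ripd pd_sym by blast
  have invRi: "invertible Ri" using Ripd pd_invertible by blast
  have Wpd: "pos_def W"
    using pd_congr[OF pd_minv[OF Spd] invR] symR by (simp add: W_def sym_mat_def)
  have lnob: "ln (piw_objective Psi m q n X mh Sg) = - N * ln (det R) + \<phi> (R ** matrix_inv Sg ** R)"
    and obpos: "piw_objective Psi m q n X mh Sg > 0" if "pos_def Sg" for Sg
    using lnobj[OF Psi that, of m q n X mh] by (simp_all add: N_def R_def Ri_def \<phi>_def z_def)
  have phimax: "\<phi> M \<le> \<phi> W" if M: "pos_def M" for M
  proof -
    have p1: "pos_def (Ri ** M ** Ri)" using pd_congr[OF M invRi] symRi by (simp add: sym_mat_def)
    define Sg where "Sg = matrix_inv (Ri ** M ** Ri)"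
    have Sgpd: "pos_def Sg" unfolding Sg_def using pd_minv[OF p1] .
    have "matrix_inv Sg = Ri ** M ** Ri" unfolding Sg_def by (rule minv_minv[OF pd_invertible[OF p1]])
    then have RSR: "R ** matrix_inv Sg ** R = M"
      by (metis RRi RiR matrix_mul_assoc matrix_mul_lid matrix_mul_rid)
    have "ln (piw_objective Psi m q n X mh Sg) \<le> ln (piw_objective Psi m q n X mh SigmaHat)"
      using maxmh[OF Sgpd] obpos[OF Sgpd] obpos[OF Spd] by simp
    then show ?thesis using lnob[OF Sgpd] lnob[OF Spd] RSR by (simp add: W_def)
  qed
  have Npos: "N > 0"
  proof -
    have "m \<ge> 0" using assms(2) of_nat_0_le_iff order_trans by blast
    then have "real q * m \<ge> 0" by simp
    then show ?thesis unfolding N_def by linarith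
  qed
  have stat: "(if i = j then N else 0) = (\<Sum>l\<in>{1..n}. z l $ i * (W *v z l) $ j) + real q * mat_pow W q $ i $ j" for i j
    by (rule stationarity[OF Wpd q]) (use phimax in \<open>simp add: \<phi>_def\<close>)
  define Z where "Z = (\<Sum>l\<in>{1..n}. outer (z l) (z l))"
  have symW: "sym_mat W" using Wpd pd_sym by blast
  have ZW: "(Z ** W) $ i $ j = (\<Sum>l\<in>{1..n}. z l $ i * (W *v z l) $ j)" for i j
  proof -
    have tW: "transpose W = W" using symW by (simp add: sym_mat_def)
    have "(Z ** W) $ i $ j = (\<Sum>l\<in>{1..n}. (outer (z l) (W *v z l)) $ i $ j)"
      by (simp only: Z_def sum_mm outer_mm sum_component tW)
    then show ?thesis by (simp add: outer_def)
  qed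
  have Zpsd: "x \<bullet> (Z *v x) \<ge> 0" for x
    unfolding Z_def quad_outer_sum by (simp add: sum_nonneg)
  have fb: "\<beta> * (x \<bullet> x) \<le> x \<bullet> (matrix_inv W *v x) \<and> x \<bullet> (matrix_inv W *v x) \<le> \<beta> * (x \<bullet> x) + (x \<bullet> (Z *v x)) / N" for x
    unfolding \<beta>_def by (rule final_bounds[OF Wpd q Npos Zpsd]) (simp add: ZW stat)
  have TW: "matrix_inv W = Ri ** SigmaHat ** Ri"
  proof -
    have invSi: "invertible (matrix_inv SigmaHat)" using pd_invertible[OF pd_minv[OF Spd]] .
    have invS: "invertible SigmaHat" using pd_invertible[OF Spd] .
    have "matrix_inv W = matrix_inv R ** matrix_inv (R ** matrix_inv SigmaHat)"
      unfolding W_def by (rule minv_mult) (use invR invSi invertible_mult in auto)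
    also have "matrix_inv (R ** matrix_inv SigmaHat) = matrix_inv (matrix_inv SigmaHat) ** matrix_inv R"
      by (rule minv_mult[OF invR invSi])
    also have "matrix_inv (matrix_inv SigmaHat) = SigmaHat" by (rule minv_minv[OF invS])
    finally show ?thesis by (simp add: Ri_def matrix_mul_assoc)
  qed
  have key: "\<beta> * (y \<bullet> (Psi *v y)) \<le> y \<bullet> (SigmaHat *v y) \<and>
      y \<bullet> (SigmaHat *v y) \<le> \<beta> * (y \<bullet> (Psi *v y)) + \<gamma> * (y \<bullet> (sample_cov n X *v y))" for y
  proof -
    define x where "x = R *v y"
    have RiRv: "Ri *v (R *v v) = v" for v by (simp add: matrix_vector_mul_assoc RiR)
    have RRiv: "R *v (Ri *v v) = v" for v by (simp add: matrix_vector_mul_assoc RRi)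
    have e1: "x \<bullet> (matrix_inv W *v x) = y \<bullet> (SigmaHat *v y)"
    proof -
      have "matrix_inv W *v x = Ri *v (SigmaHat *v y)"
        unfolding TW x_def by (simp add: matrix_vector_mul_assoc[symmetric] RiRv)
      then have "x \<bullet> (matrix_inv W *v x) = (R *v y) \<bullet> (Ri *v (SigmaHat *v y))" by (simp add: x_def)
      also have "... = y \<bullet> (R *v (Ri *v (SigmaHat *v y)))" using sym_inner[OF symR] by simp
      finally show ?thesis by (simp add: RRiv)
    qed
    have e2: "x \<bullet> x = y \<bullet> (Psi *v y)"
    proof -
      have "x \<bullet> x = y \<bullet> (R *v (R *v y))" unfolding x_def using sym_inner[OF symR] by simp
      then show ?thesis by (simp add: matrix_vector_mul_assoc RR)
    qed
    have e3: "(x \<bullet> (Z *v x)) / N = \<gamma> * (y \<bullet> (sample_cov n X *v y))"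
    proof -
      have zx: "z l \<bullet> x = (X l - mh) \<bullet> y" for l
      proof -
        have "z l \<bullet> x = (R *v z l) \<bullet> y" unfolding x_def using sym_inner[OF symR] by simp
        then show ?thesis by (simp add: z_def RRiv)
      qed
      have "x \<bullet> (Z *v x) = (\<Sum>l\<in>{1..n}. ((X l - mh) \<bullet> y)^2)"
        unfolding Z_def quad_outer_sum zx ..
      moreover have "y \<bullet> (sample_cov n X *v y) = (1 / real n) * (\<Sum>l\<in>{1..n}. ((X l - mh) \<bullet> y)^2)"
        unfolding mh_def by (rule quad_sample_cov)
      ultimately show ?thesis using n by (simp add: \<gamma>_def)
    qed
    show ?thesis using fb[of x] e1 e2 e3 by simp
  qed
  have symPsi: "sym_mat Psi" using Psi pd_sym by blast
  have symS: "sym_mat SigmaHat" using Spd pd_sym by blast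
  have symC: "sym_mat (sample_cov n X)" by (rule sym_sample_cov)
  have L1: "loewner_le (\<beta> *\<^sub>R Psi) SigmaHat"
    unfolding loewner_le_def pos_semidef_def
    using key symS symPsi by (simp add: quad_diff quad_scale sym_diff sym_scale)
  have L2: "loewner_le SigmaHat (\<beta> *\<^sub>R Psi + \<gamma> *\<^sub>R sample_cov n X)"
    unfolding loewner_le_def pos_semidef_def
    using key symS symPsi symC by (simp add: quad_diff quad_add quad_scale sym_diff sym_add sym_scale)
  have L3: "\<beta> * Psi $ i $ i \<le> SigmaHat $ i $ i
              \<and> SigmaHat $ i $ i \<le> \<beta> * Psi $ i $ i + \<gamma> * sample_cov n X $ i $ i" for i
    using key[of "axis i 1"] by (simp add: axis_quad)
  show ?thesis using L1 L2 L3 by blast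
qed

end
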